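(* Let $f:\mathbb{R}^2\to\mathbb{R}^2$ be a homeomorphism having an asymptotically stable fixed point $p$ whose basin of attraction $\{x\in\mathbb{R}^2: f^n(x)\to p \text{ as } n\to+\infty\}$ is all of $\mathbb{R}^2$. Then $f$ satisfies the topological shadowing property.
   Context: A fixed point $p$ of $f$ is asymptotically stable if it is Lyapunov stable (for every neighborhood $V$ of $p$ there is a neighborhood $V'$ of $p$ with $f^n(V')\subset V$ for all $n\ge0$) and attracting (there is a neighborhood $V$ of $p$ with $f^n(x)\to p$ for all $x\in V$). Let $\mathcal{C}^+=\{\epsilon:\mathbb{R}^2\to\mathbb{R}^+ : \epsilon \text{ continuous}\}$. For $\delta\in\mathcal{C}^+$, a sequence $\{x_n\}_{n\in\mathbb{Z}}$ is a $\delta$-pseudo-orbit of $f$ if $d(f(x_n),x_{n+1})<\delta(f(x_n))$ for every $n\in\mathbb{Z}$. For $\epsilon\in\mathcal{C}^+$, the sequence $\{x_n\}$ is $\epsilon$-shadowed by an orbit if there is $y$ with $d(f^n(y),x_n)<\epsilon(x_n)$ for every $n\in\mathbb{Z}$. The homeomorphism $f$ satisfies the topological shadowing property if for every $\epsilon\in\mathcal{C}^+$ there exists $\delta\in\mathcal{C}^+$ such that every $\delta$-pseudo-orbit is $\epsilon$-shadowed by an orbit. $\mathbb{R}^2$ carries the Euclidean metric $d$. *)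

theory Defs
  imports "HOL-Analysis.Analysis"
begin

type_synonym R2 = "real ^ 2"

definition is_homeo :: "(R2 \<Rightarrow> R2) \<Rightarrow> bool" where
  "is_homeo f \<longleftrightarrow> (\<exists>g. homeomorphism UNIV UNIV f g)"

definition iter_int :: "(R2 \<Rightarrow> R2) \<Rightarrow> int \<Rightarrow> R2 \<Rightarrow> R2" where
  "iter_int f n = (if n \<ge> 0 then f ^^ nat n else (inv f) ^^ nat (- n))"

definition lyapunov_stable :: "(R2 \<Rightarrow> R2) \<Rightarrow> R2 \<Rightarrow> bool" where
  "lyapunov_stable f p \<longleftrightarrow>
     (\<forall>V. open V \<and> p \<in> V \<longrightarrow>
        (\<exists>V'. open V' \<and> p \<in> V' \<and> (\<forall>n::nat. (f ^^ n) ` V' \<subseteq> V)))"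

definition attracting :: "(R2 \<Rightarrow> R2) \<Rightarrow> R2 \<Rightarrow> bool" where
  "attracting f p \<longleftrightarrow>
     (\<exists>V. open V \<and> p \<in> V \<and> (\<forall>x\<in>V. (\<lambda>n. (f ^^ n) x) \<longlonglongrightarrow> p))"

definition asymptotically_stable :: "(R2 \<Rightarrow> R2) \<Rightarrow> R2 \<Rightarrow> bool" where
  "asymptotically_stable f p \<longleftrightarrow> f p = p \<and> lyapunov_stable f p \<and> attracting f p"

definition basin :: "(R2 \<Rightarrow> R2) \<Rightarrow> R2 \<Rightarrow> R2 set" where
  "basin f p = {x. (\<lambda>n. (f ^^ n) x) \<longlonglongrightarrow> p}"

definition Cplus :: "(R2 \<Rightarrow> real) set" where
  "Cplus = {\<epsilon>. continuous_on UNIV \<epsilon> \<and> (\<forall>x. \<epsilon> x > 0)}"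

definition pseudo_orbit :: "(R2 \<Rightarrow> R2) \<Rightarrow> (R2 \<Rightarrow> real) \<Rightarrow> (int \<Rightarrow> R2) \<Rightarrow> bool" where
  "pseudo_orbit f \<delta> xs \<longleftrightarrow> (\<forall>n. dist (f (xs n)) (xs (n + 1)) < \<delta> (f (xs n)))"

definition shadowed :: "(R2 \<Rightarrow> R2) \<Rightarrow> (R2 \<Rightarrow> real) \<Rightarrow> (int \<Rightarrow> R2) \<Rightarrow> bool" where
  "shadowed f \<epsilon> xs \<longleftrightarrow> (\<exists>y. \<forall>n. dist (iter_int f n y) (xs n) < \<epsilon> (xs n))"

definition topological_shadowing :: "(R2 \<Rightarrow> R2) \<Rightarrow> bool" where
  "topological_shadowing f \<longleftrightarrow>
     (\<forall>\<epsilon>\<in>Cplus. \<exists>\<delta>\<in>Cplus. \<forall>xs. pseudo_orbit f \<delta> xs \<longrightarrow> shadowed f \<epsilon> xs)"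

end

theory Submission
  imports Defs
begin


lemma unif_cont_ball:
  fixes h :: "R2 \<Rightarrow> 'b::metric_space"
  assumes "continuous_on UNIV h" "e > 0"
  shows "\<exists>\<rho>>0. \<forall>x x'. dist p x \<le> R \<longrightarrow> dist x x' < \<rho> \<longrightarrow> dist (h x) (h x') < e"
proof -
  have "uniformly_continuous_on (cball p (R+1)) h"
    by (rule compact_uniformly_continuous[OF continuous_on_subset[OF assms(1)]]) auto
  then obtain d where d: "d > 0" "\<And>x x'. x \<in> cball p (R+1) \<Longrightarrow> x' \<in> cball p (R+1) \<Longrightarrow> dist x' x < d \<Longrightarrow> dist (h x') (h x) < e"
    using assms(2) unfolding uniformly_continuous_on_def by metis
  show ?thesis
  proof (intro exI[of _ "min 1 d"] conjI allI impI)
    fix x x' assume a: "dist p x \<le> R" "dist x x' < min 1 d"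
    then have "dist p x' \<le> R + 1" using dist_triangle[of p x' x] by (simp add: dist_commute)
    then show "dist (h x) (h x') < e" using d(2)[of x' x] a by (simp add: dist_commute)
  qed (use d in auto)
qed

lemma cont_at_fin:
  fixes F :: "nat \<Rightarrow> R2 \<Rightarrow> real"
  assumes "\<And>n. continuous_on UNIV (F n)" "e > 0"
  shows "\<exists>d>0. \<forall>n\<le>N. \<forall>x. dist x x0 < d \<longrightarrow> dist (F n x) (F n x0) < e"
proof (induction N)
  case 0
  then show ?case using assms unfolding continuous_on_iff by (metis UNIV_I le_zero_eq)
next
  case (Suc N)
  then obtain d1 where d1: "d1 > 0" "\<forall>n\<le>N. \<forall>x. dist x x0 < d1 \<longrightarrow> dist (F n x) (F n x0) < e" by blast
  obtain d2 where d2: "d2 > 0" "\<forall>x. dist x x0 < d2 \<longrightarrow> dist (F (Suc N) x) (F (Suc N) x0) < e"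
    using assms unfolding continuous_on_iff by (metis UNIV_I)
  show ?case
    by (rule exI[of _ "min d1 d2"]) (use d1 d2 le_Suc_eq in auto)
qed

lemma below_seq:
  fixes c :: "nat \<Rightarrow> real"
  assumes cpos: "\<And>n. c n > 0"
  shows "\<exists>\<psi>::real\<Rightarrow>real. continuous_on UNIV \<psi> \<and> (\<forall>v. \<psi> v > 0) \<and> (\<forall>u v. u \<le> v \<longrightarrow> \<psi> v \<le> \<psi> u)
     \<and> (\<forall>v. v \<ge> 0 \<longrightarrow> \<psi> v \<le> c (nat \<lfloor>v\<rfloor>))"
proof -
  define T where "T v n = c n + max 0 (real n - v)" for v n
  define \<psi> where "\<psi> v = Inf (range (T v))" for v
  have bdd: "bdd_below (range (T v))" for v
  proof (rule bdd_belowI[of _ 0])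
    fix t assume "t \<in> range (T v)"
    then obtain n where "t = T v n" by auto
    moreover have "0 < c n" by (rule cpos)
    ultimately show "0 \<le> t" unfolding T_def by simp
  qed
  have low: "\<psi> v \<le> T v n" for v n unfolding \<psi>_def by (rule cInf_lower[OF _ bdd]) auto
  have pos: "\<psi> v > 0" for v
  proof -
    define K where "K = nat \<lceil>v\<rceil> + 1"
    define L where "L = min 1 (Min (c ` {..K}))"
    have Lpos: "L > 0" unfolding L_def using cpos by (simp add: Min_gr_iff)
    have "L \<le> \<psi> v" unfolding \<psi>_def
    proof (rule cInf_greatest)
      fix t assume "t \<in> range (T v)"
      then obtain n where t: "t = T v n" by auto
      show "L \<le> t"
      proof (cases "n \<le> K")
        case True
        then have "L \<le> c n" unfolding L_def by (simp add: min.coboundedI2)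
        then show ?thesis unfolding t T_def by linarith
      next
        case False
        then have "real n \<ge> v + 1" unfolding K_def by linarith
        then have "1 \<le> max 0 (real n - v)" by simp
        then show ?thesis unfolding t T_def L_def using cpos[of n] by linarith
      qed
    qed auto
    with Lpos show ?thesis by simp
  qed
  have anti: "\<psi> v \<le> \<psi> u" if "u \<le> v" for u v
    unfolding \<psi>_def[of u]
  proof (rule cInf_greatest)
    fix t assume "t \<in> range (T u)"
    then obtain n where t: "t = T u n" by auto
    have "T v n \<le> T u n" unfolding T_def using that by simp
    then show "\<psi> v \<le> t" using low[of v n] t by simp
  qed auto
  have lip: "\<psi> u \<le> \<psi> v + \<bar>u - v\<bar>" for u v
  proof -
    have "\<psi> u - \<bar>u - v\<bar> \<le> \<psi> v" unfolding \<psi>_def[of v]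
    proof (rule cInf_greatest)
      fix t assume "t \<in> range (T v)"
      then obtain n where t: "t = T v n" by auto
      have "T u n \<le> T v n + \<bar>u - v\<bar>" unfolding T_def by simp
      then show "\<psi> u - \<bar>u - v\<bar> \<le> t" using low[of u n] t by simp
    qed auto
    then show ?thesis by simp
  qed
  have cont: "continuous_on UNIV \<psi>"
    unfolding continuous_on_iff
  proof (intro ballI allI impI)
    fix x e :: real assume "e > 0"
    show "\<exists>d>0. \<forall>x'\<in>UNIV. dist x' x < d \<longrightarrow> dist (\<psi> x') (\<psi> x) < e"
    proof (intro exI[of _ e] conjI ballI impI)
      fix x' assume "dist x' x < e"
      then show "dist (\<psi> x') (\<psi> x) < e"
        using lip[of x' x] lip[of x x'] by (simp add: dist_real_def abs_minus_commute)
    qed fact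
  qed
  have bnd: "\<psi> v \<le> c (nat \<lfloor>v\<rfloor>)" if "v \<ge> 0" for v
    using low[of v "nat \<lfloor>v\<rfloor>"] that unfolding T_def by simp
  show ?thesis using cont pos anti bnd by blast
qed

lemma modulus_gen:
  fixes F :: "'i \<Rightarrow> R2 \<Rightarrow> 'b::metric_space" and p :: R2
  assumes H: "\<And>R e. e > 0 \<Longrightarrow> \<exists>\<rho>>0. \<forall>x x'. dist p x \<le> R \<longrightarrow> dist x x' < \<rho> \<longrightarrow> (\<forall>k. dist (F k x) (F k x') < e)"
    and eta: "\<eta> \<in> Cplus"
  shows "\<exists>\<delta>\<in>Cplus. \<forall>w w'. dist w w' < \<delta> w \<longrightarrow> (\<forall>k. dist (F k w) (F k w') < \<eta> w)"
proof -
  have ec: "continuous_on UNIV \<eta>" and ep: "\<And>x. \<eta> x > 0" using eta unfolding Cplus_def by auto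
  have "\<forall>n::nat. \<exists>m. m > 0 \<and> (\<forall>x\<in>cball p (real n + 1). m \<le> \<eta> x)"
  proof
    fix n :: nat
    have ne: "cball p (real n + 1) \<noteq> {}" by (simp add: add_nonneg_nonneg)
    obtain x0 where "x0 \<in> cball p (real n + 1)" "\<forall>y\<in>cball p (real n + 1). \<eta> x0 \<le> \<eta> y"
      using continuous_attains_inf[OF compact_cball ne continuous_on_subset[OF ec subset_UNIV]] by blast
    then show "\<exists>m. m > 0 \<and> (\<forall>x\<in>cball p (real n + 1). m \<le> \<eta> x)" using ep[of x0] by blast
  qed
  then obtain m where m0: "\<forall>n. m n > 0 \<and> (\<forall>x\<in>cball p (real n + 1). m n \<le> \<eta> x)"
    by (rule choice[THEN exE])
  then have m: "\<And>n. m n > 0" "\<And>n x. x \<in> cball p (real n + 1) \<Longrightarrow> m n \<le> \<eta> x" by auto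
  have "\<forall>n::nat. \<exists>\<rho>. \<rho> > 0 \<and> (\<forall>x x'. dist p x \<le> real n + 1 \<longrightarrow> dist x x' < \<rho> \<longrightarrow> (\<forall>k. dist (F k x) (F k x') < m n))"
  proof
    fix n show "\<exists>\<rho>. \<rho> > 0 \<and> (\<forall>x x'. dist p x \<le> real n + 1 \<longrightarrow> dist x x' < \<rho> \<longrightarrow> (\<forall>k. dist (F k x) (F k x') < m n))"
      using H[OF m(1)[of n], of "real n + 1"] by simp
  qed
  then obtain \<rho> where \<rho>0: "\<forall>n. \<rho> n > 0 \<and> (\<forall>x x'. dist p x \<le> real n + 1 \<longrightarrow> dist x x' < \<rho> n \<longrightarrow> (\<forall>k. dist (F k x) (F k x') < m n))"
    by (rule choice[THEN exE])
  then have \<rho>: "\<And>n. \<rho> n > 0"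
    "\<And>n x x'. dist p x \<le> real n + 1 \<Longrightarrow> dist x x' < \<rho> n \<Longrightarrow> (\<forall>k. dist (F k x) (F k x') < m n)"
    by auto
  obtain \<psi> :: "real \<Rightarrow> real" where \<psi>0: "continuous_on UNIV \<psi>" "\<forall>v. \<psi> v > 0" "\<forall>v. v \<ge> 0 \<longrightarrow> \<psi> v \<le> \<rho> (nat \<lfloor>v\<rfloor>)"
    using below_seq[of \<rho>, OF \<rho>(1)] by (elim exE conjE) (rule that, assumption+)
  have \<psi>: "continuous_on UNIV \<psi>" "\<And>v. \<psi> v > 0" "\<And>v. v \<ge> 0 \<Longrightarrow> \<psi> v \<le> \<rho> (nat \<lfloor>v\<rfloor>)"
    using \<psi>0 by auto
  define \<delta> where "\<delta> w = \<psi> (dist p w)" for w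
  have "continuous_on UNIV (\<lambda>w. dist p w)" by (intro continuous_intros)
  then have "continuous_on UNIV \<delta>" unfolding \<delta>_def using continuous_on_compose2[OF \<psi>(1)] by blast
  then have "\<delta> \<in> Cplus" unfolding Cplus_def \<delta>_def using \<psi>(2) by simp
  moreover have "\<forall>w w'. dist w w' < \<delta> w \<longrightarrow> (\<forall>k. dist (F k w) (F k w') < \<eta> w)"
  proof (intro allI impI)
    fix w w' k assume a: "dist w w' < \<delta> w"
    define n where "n = nat \<lfloor>dist p w\<rfloor>"
    have d1: "dist p w \<le> real n + 1" unfolding n_def by linarith
    have "\<delta> w \<le> \<rho> n" unfolding \<delta>_def n_def using \<psi>(3)[of "dist p w"] by simp
    then have "dist (F k w) (F k w') < m n" using \<rho>(2)[OF d1] a by simp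
    also have "m n \<le> \<eta> w" using m(2)[of w n] d1 by simp
    finally show "dist (F k w) (F k w') < \<eta> w" .
  qed
  ultimately show ?thesis by blast
qed



locale sys =
  fixes f g :: "R2 \<Rightarrow> R2" and p :: R2
  assumes hom: "homeomorphism UNIV UNIV f g"
    and fp: "f p = p"
    and lyap: "lyapunov_stable f p"
    and bas: "\<And>x. (\<lambda>n. (f ^^ n) x) \<longlonglongrightarrow> p"
begin

lemma gf[simp]: "g (f x) = x" using hom unfolding homeomorphism_def by auto
lemma fg[simp]: "f (g x) = x" using hom unfolding homeomorphism_def by auto
lemma contf: "continuous_on UNIV f" using hom unfolding homeomorphism_def by auto
lemma contg: "continuous_on UNIV g" using hom unfolding homeomorphism_def by auto
lemma gp[simp]: "g p = p" using gf[of p] fp by simp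

lemma cont_fn: "continuous_on UNIV (f ^^ n)"
  by (induction n) (auto intro: continuous_on_compose2[OF contf] simp: continuous_on_id)
lemma cont_gn: "continuous_on UNIV (g ^^ n)"
  by (induction n) (auto intro: continuous_on_compose2[OF contg] simp: continuous_on_id)

lemma fn_p[simp]: "(f ^^ n) p = p" by (induction n) (auto simp: fp)
lemma gn_p[simp]: "(g ^^ n) p = p" by (induction n) auto

lemma fn_gn: "(f ^^ n) ((g ^^ n) x) = x"
proof (induction n arbitrary: x)
  case (Suc n)
  have "(f ^^ Suc n) ((g ^^ Suc n) x) = (f ^^ n) (f (g ((g^^n) x)))"
    by (simp add: funpow_swap1)
  then show ?case using Suc by simp
qed simp

lemma gn_fn: "(g ^^ n) ((f ^^ n) x) = x"
proof (induction n arbitrary: x)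
  case (Suc n)
  have "(g ^^ Suc n) ((f ^^ Suc n) x) = (g ^^ n) (g (f ((f^^n) x)))"
    by (simp add: funpow_swap1)
  then show ?case using Suc by simp
qed simp

lemma inv_f: "inv f = g"
proof
  fix x show "inv f x = g x" by (metis fg gf inv_f_f bij_betw_def bij_def inj_def inv_f_eq)
qed

lemma unif_attr:
  assumes "compact C" "r > 0"
  shows "\<exists>N. \<forall>n\<ge>N. \<forall>x\<in>C. dist ((f^^n) x) p < r"
proof -
  obtain V' where V': "open V'" "p \<in> V'" "\<And>n. (f ^^ n) ` V' \<subseteq> ball p r"
    using lyap assms(2) unfolding lyapunov_stable_def by (meson centre_in_ball open_ball)
  have cov: "C \<subseteq> (\<Union>m\<in>UNIV. (f^^m) -` V')"
  proof
    fix x assume "x \<in> C"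
    have "eventually (\<lambda>n. (f^^n) x \<in> V') sequentially"
      using bas[of x] V'(1,2) by (simp add: tendsto_def)
    then obtain m where "(f^^m) x \<in> V'" by (meson eventually_sequentially order_refl)
    then show "x \<in> (\<Union>m\<in>UNIV. (f^^m) -` V')" by blast
  qed
  have opn: "open ((f^^m) -` V')" for m using open_vimage[OF V'(1) cont_fn] .
  obtain C' where C': "finite C'" "C \<subseteq> (\<Union>m\<in>C'. (f^^m) -` V')"
    using compactE_image[OF assms(1) opn cov] by metis
  show ?thesis
  proof (intro exI allI impI ballI)
    fix n x assume n: "Sup C' \<le> n" and x: "x \<in> C"
    then obtain m where m: "m \<in> C'" "(f^^m) x \<in> V'" using C' by blast
    have "m \<le> n" using m C' n by (meson le_cSup_finite order_trans)
    then have "(f^^n) x = (f^^(n-m)) ((f^^m) x)" by (metis funpow_add le_add_diff_inverse2 o_apply)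
    then show "dist ((f^^n) x) p < r" using V'(3)[of "n-m"] m by (auto simp: dist_commute)
  qed
qed


lemma fin_unif:
  assumes "e > 0"
  shows "\<exists>\<rho>>0. \<forall>k<M. \<forall>x x'. dist p x \<le> R \<longrightarrow> dist x x' < \<rho> \<longrightarrow> dist ((f^^k) x) ((f^^k) x') < e"
proof (induction M)
  case 0 then show ?case by (intro exI[of _ 1]) auto
next
  case (Suc M)
  then obtain d1 where d1: "d1 > 0" "\<forall>k<M. \<forall>x x'. dist p x \<le> R \<longrightarrow> dist x x' < d1 \<longrightarrow> dist ((f^^k) x) ((f^^k) x') < e"
    by blast
  obtain d2 where d2: "d2 > 0" "\<forall>x x'. dist p x \<le> R \<longrightarrow> dist x x' < d2 \<longrightarrow> dist ((f^^M) x) ((f^^M) x') < e"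
    using unif_cont_ball[OF cont_fn assms, of p R] by blast
  show ?case
  proof (intro exI[of _ "min d1 d2"] conjI allI impI)
    fix k x x' assume "k < Suc M" "dist p x \<le> R" "dist x x' < min d1 d2"
    then show "dist ((f^^k) x) ((f^^k) x') < e"
      using d1 d2 by (cases "k = M") auto
  qed (use d1 d2 in auto)
qed

lemma equicont:
  assumes "e > 0"
  shows "\<exists>\<rho>>0. \<forall>x x'. dist p x \<le> R \<longrightarrow> dist x x' < \<rho> \<longrightarrow> (\<forall>k. dist ((f^^k) x) ((f^^k) x') < e)"
proof -
  have e2: "e/2 > 0" using assms by simp
  obtain V' where V': "open V'" "p \<in> V'" "\<And>n. (f ^^ n) ` V' \<subseteq> ball p (e/2)"
    using lyap e2 unfolding lyapunov_stable_def by (meson centre_in_ball open_ball)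
  obtain s where s: "s > 0" "ball p s \<subseteq> V'" using V'(1,2) open_contains_ball by blast
  obtain N where N: "\<forall>n\<ge>N. \<forall>x\<in>cball p (R+1). dist ((f^^n) x) p < s"
    using unif_attr[OF compact_cball s(1)] by blast
  obtain \<rho> where \<rho>: "\<rho> > 0" "\<forall>k<N. \<forall>x x'. dist p x \<le> R \<longrightarrow> dist x x' < \<rho> \<longrightarrow> dist ((f^^k) x) ((f^^k) x') < e"
    using fin_unif[OF assms, of N R] by blast
  have far: "dist ((f^^k) y) p < e/2" if "k \<ge> N" "y \<in> cball p (R+1)" for k y
  proof -
    have "(f^^N) y \<in> V'" using N that s(2) by (auto simp: dist_commute)
    then have "(f^^(k-N)) ((f^^N) y) \<in> ball p (e/2)" using V'(3) by blast
    moreover have "(f^^k) y = (f^^(k-N)) ((f^^N) y)" using that(1)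
      by (metis funpow_add le_add_diff_inverse2 o_apply)
    ultimately show ?thesis by (simp add: dist_commute)
  qed
  show ?thesis
  proof (intro exI[of _ "min 1 \<rho>"] conjI allI impI)
    fix x x' k assume a: "dist p x \<le> R" "dist x x' < min 1 \<rho>"
    show "dist ((f^^k) x) ((f^^k) x') < e"
    proof (cases "k < N")
      case True then show ?thesis using \<rho> a by auto
    next
      case False
      have "dist p x' \<le> R + 1" using dist_triangle[of p x' x] a by (simp add: dist_commute)
      then have "dist ((f^^k) x') p < e/2" using far[of k x'] False by simp
      moreover have "dist ((f^^k) x) p < e/2" using far[of k x] False a(1) by simp
      ultimately show ?thesis using dist_triangle[of "(f^^k) x" "(f^^k) x'" p] by (simp add: dist_commute)
    qed
  qed (use \<rho> in auto)
qed

definition Vt :: "R2 \<Rightarrow> nat \<Rightarrow> real" where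
  "Vt x n = (2 - 1 / (real n + 1)) * dist ((f^^n) x) p"

definition V :: "R2 \<Rightarrow> real" where
  "V x = Sup (range (Vt x))"

lemma orbit_bdd: "\<exists>K. \<forall>n. dist ((f^^n) x) p \<le> K"
proof -
  have "(\<lambda>n. dist ((f^^n) x) p) \<longlonglongrightarrow> dist p p" by (intro tendsto_dist bas tendsto_const)
  then have "Bseq (\<lambda>n. dist ((f^^n) x) p)" using convergent_imp_Bseq convergentI by blast
  then show ?thesis unfolding Bseq_def by auto
qed

lemma Vt_nonneg: "Vt x n \<ge> 0"
proof -
  have "1 / (real n + 1) \<le> 1" by (simp add: divide_le_eq)
  then have "0 \<le> 2 - 1 / (real n + 1)" by linarith
  then show ?thesis unfolding Vt_def by simp
qed

lemma Vt_le: "Vt x n \<le> 2 * dist ((f^^n) x) p"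
  unfolding Vt_def by (intro mult_right_mono) auto

lemma bddV: "bdd_above (range (Vt x))"
proof -
  obtain K where K: "\<forall>n. dist ((f^^n) x) p \<le> K" using orbit_bdd by blast
  show ?thesis
  proof (rule bdd_aboveI[of _ "2*K"])
    fix z assume "z \<in> range (Vt x)"
    then obtain n where "z = Vt x n" by auto
    then show "z \<le> 2*K" using Vt_le[of x n] K[rule_format, of n] by linarith
  qed
qed

lemma Vt_V: "Vt x n \<le> V x" unfolding V_def by (rule cSup_upper[OF _ bddV]) auto

lemma V_least: "(\<And>n. Vt x n \<le> c) \<Longrightarrow> V x \<le> c" unfolding V_def by (rule cSup_least) auto

lemma V_dist: "dist x p \<le> V x" using Vt_V[of x 0] unfolding Vt_def by simp

lemma V_nonneg: "V x \<ge> 0" using V_dist[of x] zero_le_dist order_trans by blast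

lemma V_p[simp]: "V p = 0"
  using V_least[of p 0] V_nonneg[of p] unfolding Vt_def by simp

lemma cont_Vt: "continuous_on UNIV (\<lambda>x. Vt x n)"
  unfolding Vt_def by (intro continuous_intros continuous_on_compose2[OF continuous_on_dist[OF continuous_on_id continuous_on_const] cont_fn]) auto

lemma V_cont: "continuous_on UNIV V"
  unfolding continuous_on_iff
proof (intro ballI allI impI)
  fix x0 :: R2 and e :: real assume e: "e > 0"
  have e8: "e/8 > 0" using e by simp
  obtain N where N: "\<forall>n\<ge>N. \<forall>x\<in>cball x0 1. dist ((f^^n) x) p < e/8"
    using unif_attr[OF compact_cball e8] by blast
  have e4: "e/4 > 0" using e by simp
  obtain d where d: "d > 0" "\<forall>n\<le>N. \<forall>x. dist x x0 < d \<longrightarrow> dist (Vt x n) (Vt x0 n) < e/4"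
    using cont_at_fin[of "\<lambda>n x. Vt x n", OF cont_Vt e4, of N x0] by blast
  show "\<exists>d>0. \<forall>x'\<in>UNIV. dist x' x0 < d \<longrightarrow> dist (V x') (V x0) < e"
  proof (intro exI[of _ "min 1 d"] conjI ballI impI)
    fix x assume x: "dist x x0 < min 1 d"
    have xc: "x \<in> cball x0 1" "x0 \<in> cball x0 1" using x by (auto simp: dist_commute)
    have tail: "Vt y n < e/4" if "n > N" "y \<in> cball x0 1" for n y
    proof -
      have "dist ((f^^n) y) p < e/8" using N that by auto
      then show ?thesis using Vt_le[of y n] by linarith
    qed
    have "V x \<le> V x0 + e/4"
    proof (rule V_least)
      fix n show "Vt x n \<le> V x0 + e/4"
      proof (cases "n \<le> N")
        case True
        have "dist (Vt x n) (Vt x0 n) < e/4" using d(2) True x by auto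
        then have "Vt x n < Vt x0 n + e/4" unfolding dist_real_def by linarith
        then show ?thesis using Vt_V[of x0 n] by simp
      next
        case False then show ?thesis using tail[of n x] xc V_nonneg[of x0] by simp
      qed
    qed
    moreover have "V x0 \<le> V x + e/4"
    proof (rule V_least)
      fix n show "Vt x0 n \<le> V x + e/4"
      proof (cases "n \<le> N")
        case True
        have "dist (Vt x n) (Vt x0 n) < e/4" using d(2) True x by auto
        then have "Vt x0 n < Vt x n + e/4" unfolding dist_real_def by linarith
        then show ?thesis using Vt_V[of x n] by simp
      next
        case False then show ?thesis using tail[of n x0] xc V_nonneg[of x] by simp
      qed
    qed
    ultimately show "dist (V x) (V x0) < e" using e by (simp add: dist_real_def)
  qed (use d in auto)
qed

lemma V_fx: "V (f x) = Sup (range (\<lambda>n. (2 - 1 / (real n + 1)) * dist ((f^^Suc n) x) p))"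
  unfolding V_def Vt_def by (simp add: funpow_swap1)

lemma f_neq_p: "x \<noteq> p \<Longrightarrow> f x \<noteq> p" by (metis gf gp)

lemma V_dec: assumes "x \<noteq> p" shows "V (f x) < V x"
proof -
  define t where "t n = (2 - 1 / (real n + 1)) * dist ((f^^Suc n) x) p" for n
  have Vf: "V (f x) = Sup (range t)" unfolding t_def by (rule V_fx)
  have t0: "t 0 > 0" using f_neq_p[OF assms] unfolding t_def by simp
  have "(\<lambda>n. dist ((f^^Suc n) x) p) \<longlonglongrightarrow> 0"
    using tendsto_dist[OF LIMSEQ_Suc[OF bas[of x]] tendsto_const[of p]] by simp
  then have "(\<lambda>n. 2 * dist ((f^^Suc n) x) p) \<longlonglongrightarrow> 0"
    using tendsto_mult_right_zero by blast
  from LIMSEQ_D[OF this t0] obtain N where "\<forall>n\<ge>N. norm (2 * dist ((f^^Suc n) x) p - 0) < t 0"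
    by blast
  then have N: "\<forall>n\<ge>N. 2 * dist ((f^^Suc n) x) p < t 0" by simp
  have tle: "t n \<le> 2 * dist ((f^^Suc n) x) p" for n
    unfolding t_def by (intro mult_right_mono) auto
  define M where "M = Max (t ` {..N})"
  have "M \<in> t ` {..N}" unfolding M_def by (intro Max_in) auto
  then obtain m where m: "m \<le> N" "t m = M" by auto
  have tM: "t n \<le> t m" for n
  proof (cases "n \<le> N")
    case True
    have "t n \<le> M" unfolding M_def by (rule Max_ge) (use True in auto)
    then show ?thesis using m by simp
  next
    case False
    then have "2 * dist ((f^^Suc n) x) p < t 0" using N by simp
    then have "t n < t 0" using tle[of n] by linarith
    also have "t 0 \<le> M" unfolding M_def by (rule Max_ge) auto
    also have "M = t m" using m by simp
    finally show ?thesis by simp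
  qed
  have "Sup (range t) = t m" by (rule cSup_eq_maximum) (use tM in auto)
  then have Vfx: "V (f x) = t m" using Vf by simp
  have tmpos: "t m > 0" using tM[of 0] t0 by simp
  then have dpos: "dist ((f^^Suc m) x) p > 0" unfolding t_def
    by (metis mult_zero_right less_irrefl zero_less_dist_iff dist_self)
  have "1 / (real (Suc m) + 1) < 1 / (real m + 1)" by (simp add: frac_less2)
  then have "t m < Vt x (Suc m)" unfolding t_def Vt_def using dpos by (intro mult_strict_right_mono) auto
  then show ?thesis using Vfx Vt_V[of x "Suc m"] by simp
qed

lemma V_mono: "V (f x) \<le> V x"
  by (cases "x = p") (auto simp: fp intro: less_imp_le V_dec)

lemma V_fn: "V ((f^^n) x) \<le> V x"
  by (induction n) (auto intro: order_trans[OF V_mono])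

end


context sys begin

lemma fg_mix: "(f^^a) ((g^^b) x) = (if b \<le> a then (f^^(a-b)) x else (g^^(b-a)) x)"
proof (cases "b \<le> a")
  case True
  have "(f^^a) ((g^^b) x) = (f^^(a-b)) ((f^^b) ((g^^b) x))"
    using True by (metis funpow_add le_add_diff_inverse2 o_apply)
  then show ?thesis using True fn_gn by simp
next
  case False
  have "(f^^a) ((g^^b) x) = (f^^a) ((g^^a) ((g^^(b-a)) x))"
    using False by (metis funpow_add le_add_diff_inverse nat_le_linear o_apply)
  then show ?thesis using False fn_gn by simp
qed

lemma gf_mix: "(g^^a) ((f^^b) x) = (if b \<le> a then (g^^(a-b)) x else (f^^(b-a)) x)"
proof (cases "b \<le> a")
  case True
  have "(g^^a) ((f^^b) x) = (g^^(a-b)) ((g^^b) ((f^^b) x))"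
    using True by (metis funpow_add le_add_diff_inverse2 o_apply)
  then show ?thesis using True gn_fn by simp
next
  case False
  have "(g^^a) ((f^^b) x) = (g^^a) ((f^^a) ((f^^(b-a)) x))"
    using False by (metis funpow_add le_add_diff_inverse nat_le_linear o_apply)
  then show ?thesis using False gn_fn by simp
qed

lemma iter_int_eq: "iter_int f n = (if n \<ge> 0 then f ^^ nat n else g ^^ nat (- n))"
  unfolding iter_int_def inv_f ..

lemma iter_int_add: "iter_int f a (iter_int f b x) = iter_int f (a + b) x"
proof -
  consider "a \<ge> 0" "b \<ge> 0" | "a \<ge> 0" "b < 0" | "a < 0" "b \<ge> 0" | "a < 0" "b < 0" by linarith
  then show ?thesis
  proof cases
    case 1
    then have "nat (a + b) = nat a + nat b" by simp
    then show ?thesis using 1 by (simp add: iter_int_eq funpow_add)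
  next
    case 2
    show ?thesis
    proof (cases "a + b \<ge> 0")
      case True
      have "nat (-b) \<le> nat a" using 2 True by arith
      moreover have "nat a - nat (-b) = nat (a+b)" using 2 True by arith
      ultimately show ?thesis using 2 True by (simp add: iter_int_eq fg_mix)
    next
      case False
      have "\<not> nat (-b) \<le> nat a" using 2 False by arith
      moreover have "nat (-b) - nat a = nat (-(a+b))" using 2 False by arith
      ultimately show ?thesis using 2 False by (simp add: iter_int_eq fg_mix)
    qed
  next
    case 3
    show ?thesis
    proof (cases "a + b \<ge> 0")
      case True
      have h: "nat b - nat (-a) = nat (a+b)" using 3 True by arith
      show ?thesis
      proof (cases "nat b \<le> nat (-a)")
        case True2: True
        then have "nat (a+b) = 0" using 3 by arith
        then show ?thesis using 3 True True2 by (simp add: iter_int_eq gf_mix)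
      next
        case False
        then show ?thesis using 3 True h by (simp add: iter_int_eq gf_mix)
      qed
    next
      case False
      have "nat b \<le> nat (-a)" using 3 False by arith
      moreover have "nat (-a) - nat b = nat (-(a+b))" using 3 False by arith
      ultimately show ?thesis using 3 False by (simp add: iter_int_eq gf_mix)
    qed
  next
    case 4
    then have "nat (-(a + b)) = nat (-a) + nat (-b)" by simp
    then show ?thesis using 4 by (simp add: iter_int_eq funpow_add)
  qed
qed

lemma iter_int_p: "iter_int f n p = p" by (simp add: iter_int_eq)

lemma Vunif:
  assumes "e > 0"
  shows "\<exists>\<rho>>0. \<forall>x x'. dist p x \<le> R \<longrightarrow> dist x x' < \<rho> \<longrightarrow> (\<forall>k::nat. dist (V x) (V x') < e)"
  using unif_cont_ball[OF V_cont assms, of p R] by simp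

lemma Phi_exists:
  assumes eps: "\<epsilon> \<in> Cplus" and c0: "c0 > 0"
  shows "\<exists>\<Phi>::real\<Rightarrow>real. continuous_on UNIV \<Phi> \<and> (\<forall>v. \<Phi> v > 0) \<and> (\<forall>u v. u < v \<longrightarrow> \<Phi> v < \<Phi> u)
     \<and> (\<forall>x. \<Phi> (V x) \<le> \<epsilon> x / 2) \<and> (\<forall>x. \<Phi> (V x) \<le> c0)"
proof -
  have ec: "continuous_on UNIV \<epsilon>" and ep: "\<And>x. \<epsilon> x > 0" using eps unfolding Cplus_def by auto
  have "\<forall>n::nat. \<exists>b. b > 0 \<and> (\<forall>x\<in>{x. V x \<le> real n + 1}. b \<le> \<epsilon> x / 2)"
  proof
    fix n :: nat
    let ?S = "{x. V x \<le> real n + 1}"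
    have cl: "closed ?S" by (intro closed_Collect_le V_cont continuous_on_const)
    have bd: "bounded ?S"
    proof -
      have "?S \<subseteq> cball p (real n + 1)"
      proof
        fix x assume "x \<in> ?S"
        then show "x \<in> cball p (real n + 1)" using V_dist[of x] by (simp add: dist_commute)
      qed
      then show ?thesis using bounded_cball bounded_subset by blast
    qed
    have cp: "compact ?S" using cl bd by (simp add: compact_eq_bounded_closed)
    have ne: "?S \<noteq> {}" using V_p by (metis (mono_tags) empty_iff mem_Collect_eq of_nat_0_le_iff add_nonneg_nonneg zero_le_one)
    obtain x0 where "x0 \<in> ?S" "\<forall>y\<in>?S. \<epsilon> x0 \<le> \<epsilon> y"
      using continuous_attains_inf[OF cp ne continuous_on_subset[OF ec subset_UNIV]] by blast
    then show "\<exists>b. b > 0 \<and> (\<forall>x\<in>?S. b \<le> \<epsilon> x / 2)" using ep[of x0]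
      by (intro exI[of _ "\<epsilon> x0 / 2"]) auto
  qed
  then obtain b where b0: "\<forall>n. b n > 0 \<and> (\<forall>x\<in>{x. V x \<le> real n + 1}. b n \<le> \<epsilon> x / 2)"
    by (rule choice[THEN exE])
  define c where "c n = min (b n) c0" for n
  have cpos: "\<And>n. c n > 0" unfolding c_def using b0 c0 by simp
  obtain \<psi> :: "real \<Rightarrow> real" where \<psi>0: "continuous_on UNIV \<psi>" "\<forall>v. \<psi> v > 0"
     "\<forall>u v. u \<le> v \<longrightarrow> \<psi> v \<le> \<psi> u" "\<forall>v. v \<ge> 0 \<longrightarrow> \<psi> v \<le> c (nat \<lfloor>v\<rfloor>)"
    using below_seq[of c, OF cpos] by (elim exE conjE) (rule that, assumption+)
  define \<Phi> where "\<Phi> v = exp (- v) * \<psi> v" for v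
  have cont: "continuous_on UNIV \<Phi>" unfolding \<Phi>_def
    by (intro continuous_on_mult \<psi>0(1) continuous_intros)
  have pos: "\<forall>v. \<Phi> v > 0" unfolding \<Phi>_def using \<psi>0(2) by simp
  have sdec: "\<forall>u v. u < v \<longrightarrow> \<Phi> v < \<Phi> u"
  proof (intro allI impI)
    fix u v :: real assume uv: "u < v"
    have "exp (-v) * \<psi> v < exp (-u) * \<psi> v" using uv \<psi>0(2) by simp
    also have "\<dots> \<le> exp (-u) * \<psi> u" using \<psi>0(3) uv by simp
    finally show "\<Phi> v < \<Phi> u" unfolding \<Phi>_def .
  qed
  have le\<psi>: "\<Phi> (V x) \<le> c (nat \<lfloor>V x\<rfloor>)" for x
  proof -
    have "exp (- V x) \<le> 1" using V_nonneg[of x] by simp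
    then have "\<Phi> (V x) \<le> \<psi> (V x)" unfolding \<Phi>_def
      using mult_right_mono[of "exp (- V x)" 1 "\<psi> (V x)"] \<psi>0(2) less_imp_le by auto
    also have "\<dots> \<le> c (nat \<lfloor>V x\<rfloor>)" using \<psi>0(4) V_nonneg by blast
    finally show ?thesis .
  qed
  have "\<Phi> (V x) \<le> \<epsilon> x / 2" for x
  proof -
    have "V x \<le> real (nat \<lfloor>V x\<rfloor>) + 1" using V_nonneg[of x] by linarith
    then have "b (nat \<lfloor>V x\<rfloor>) \<le> \<epsilon> x / 2" using b0 by blast
    then show ?thesis using le\<psi>[of x] unfolding c_def by linarith
  qed
  moreover have "\<Phi> (V x) \<le> c0" for x using le\<psi>[of x] unfolding c_def by linarith
  ultimately show ?thesis using cont pos sdec by blast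
qed

end


context sys begin

theorem shadow: "topological_shadowing f"
  unfolding topological_shadowing_def
proof
  fix \<epsilon> assume eps: "\<epsilon> \<in> Cplus"
  have ec: "continuous_on UNIV \<epsilon>" and ep: "\<And>x. \<epsilon> x > 0" using eps unfolding Cplus_def by auto
  obtain r where r: "r > 0" "\<And>z. dist z p < r \<Longrightarrow> 3*r < \<epsilon> z"
  proof -
    have "\<epsilon> p / 2 > 0" using ep[of p] by simp
    then obtain d where d: "d > 0" "\<forall>z. dist z p < d \<longrightarrow> dist (\<epsilon> z) (\<epsilon> p) < \<epsilon> p / 2"
      using ec unfolding continuous_on_iff by (metis UNIV_I)
    show ?thesis
    proof (rule that[of "min d (\<epsilon> p / 6)"])
      show "min d (\<epsilon> p / 6) > 0" using d ep[of p] by simp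
      fix z assume "dist z p < min d (\<epsilon> p / 6)"
      then have "dist (\<epsilon> z) (\<epsilon> p) < \<epsilon> p / 2" using d by simp
      then have "\<epsilon> z > \<epsilon> p / 2" unfolding dist_real_def by linarith
      then show "3 * min d (\<epsilon> p / 6) < \<epsilon> z" by linarith
    qed
  qed
  obtain \<rho>V where \<rho>V: "\<rho>V > 0" "\<forall>x x'. dist p x \<le> r \<longrightarrow> dist x x' < \<rho>V \<longrightarrow> (\<forall>k::nat. dist (V x) (V x') < r)"
    using Vunif[OF r(1), of r] by blast
  define c0 where "c0 = \<rho>V / 2"
  have c0: "c0 > 0" "c0 < \<rho>V" using \<rho>V unfolding c0_def by auto
  obtain \<Phi> :: "real \<Rightarrow> real" where \<Phi>0: "continuous_on UNIV \<Phi>" "\<forall>v. \<Phi> v > 0" "\<forall>u v. u < v \<longrightarrow> \<Phi> v < \<Phi> u"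
     "\<forall>x. \<Phi> (V x) \<le> \<epsilon> x / 2" "\<forall>x. \<Phi> (V x) \<le> c0"
    using Phi_exists[OF eps c0(1)] by (elim exE conjE) (rule that, assumption+)
  have \<Phi>pos: "\<And>v. \<Phi> v > 0" and \<Phi>sd: "\<And>u v. u < v \<Longrightarrow> \<Phi> v < \<Phi> u"
    and \<Phi>eps: "\<And>x. \<Phi> (V x) \<le> \<epsilon> x / 2" and \<Phi>c0: "\<And>x. \<Phi> (V x) \<le> c0" using \<Phi>0 by auto
  have \<Phi>anti: "\<Phi> v \<le> \<Phi> u" if "u \<le> v" for u v
    using \<Phi>sd[of u v] that by (cases "u = v") auto
  define gp where "gp w = V (g w) - V w" for w
  have gp_cont: "continuous_on UNIV gp" unfolding gp_def
    using continuous_on_diff[OF continuous_on_compose2[OF V_cont contg] V_cont] by simp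
  have gp_nn: "gp w \<ge> 0" for w using V_mono[of "g w"] unfolding gp_def by simp
  have gp_pos: "gp w > 0" if "w \<noteq> p" for w
  proof -
    have "g w \<noteq> p" using that by (metis fg fp)
    then show ?thesis using V_dec[of "g w"] unfolding gp_def by simp
  qed
  have V_cont': "continuous_on UNIV V" by (rule V_cont)
  define \<beta> where "\<beta> w = min (r/4) (max (gp w / 2) (r/2 - V w))" for w
  have \<beta>C: "\<beta> \<in> Cplus" unfolding Cplus_def
  proof (intro CollectI conjI allI)
    show "continuous_on UNIV \<beta>" unfolding \<beta>_def by (intro continuous_intros gp_cont V_cont') auto
    fix w show "\<beta> w > 0"
    proof (cases "V w < r/2")
      case True then show ?thesis unfolding \<beta>_def using r(1) by simp
    next
      case False
      then have "w \<noteq> p" using r(1) by auto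
      then show ?thesis using gp_pos[of w] r(1) unfolding \<beta>_def by simp
    qed
  qed
  have \<beta>1: "\<beta> w \<le> r/4" for w unfolding \<beta>_def by (rule min.cobounded1)
  have \<beta>2: "\<beta> w \<le> gp w / 2" if "V w \<ge> r/2" for w
  proof -
    have "max (gp w / 2) (r/2 - V w) = gp w / 2" using that gp_nn[of w] by simp
    then show ?thesis unfolding \<beta>_def by (metis min.cobounded2)
  qed
  define c1 where "c1 = \<Phi> (3*r/4) - \<Phi> r"
  have c1: "c1 > 0" unfolding c1_def using \<Phi>sd[of "3*r/4" r] r(1) by simp
  define A where "A w = \<Phi> (V w + gp w / 2) - \<Phi> (V w + gp w)" for w
  have A_nn: "A w \<ge> 0" for w unfolding A_def using \<Phi>anti[of "V w + gp w / 2" "V w + gp w"] gp_nn[of w] by simp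
  define \<eta> where "\<eta> w = max (min (A w) c1) (min c1 (r/2 - V w))" for w
  have \<eta>C: "\<eta> \<in> Cplus" unfolding Cplus_def
  proof (intro CollectI conjI allI)
    have "continuous_on UNIV A" unfolding A_def
      by (intro continuous_intros continuous_on_compose2[OF \<Phi>0(1)] gp_cont V_cont') auto
    then show "continuous_on UNIV \<eta>" unfolding \<eta>_def by (intro continuous_intros V_cont') auto
    fix w show "\<eta> w > 0"
    proof (cases "V w < r/2")
      case True then show ?thesis unfolding \<eta>_def using c1 by simp
    next
      case False
      then have "w \<noteq> p" using r(1) by auto
      then have "A w > 0" unfolding A_def using \<Phi>sd gp_pos[of w] by simp
      then show ?thesis unfolding \<eta>_def using c1 by simp
    qed
  qed
  have HV: "\<exists>\<rho>>0. \<forall>x x'. dist p x \<le> R \<longrightarrow> dist x x' < \<rho> \<longrightarrow> (\<forall>k::nat. dist ((\<lambda>k. V) k x) ((\<lambda>k. V) k x') < e)"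
    if "e > 0" for R e using Vunif[OF that] by simp
  obtain \<delta>1 where \<delta>1: "\<delta>1 \<in> Cplus" "\<forall>w w'. dist w w' < \<delta>1 w \<longrightarrow> (\<forall>k::nat. dist (V w) (V w') < \<beta> w)"
    using modulus_gen[of p "\<lambda>k::nat. V", OF HV \<beta>C] by auto
  have Hf: "\<exists>\<rho>>0. \<forall>x x'. dist p x \<le> R \<longrightarrow> dist x x' < \<rho> \<longrightarrow> (\<forall>k::nat. dist ((f^^k) x) ((f^^k) x') < e)"
    if "e > 0" for R e using equicont[OF that] by simp
  obtain \<delta>2 where \<delta>2: "\<delta>2 \<in> Cplus" "\<forall>w w'. dist w w' < \<delta>2 w \<longrightarrow> (\<forall>k::nat. dist ((f^^k) w) ((f^^k) w') < \<eta> w)"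
    using modulus_gen[of p "\<lambda>k::nat. f^^k", OF Hf \<eta>C] by auto
  define \<delta> where "\<delta> w = min (\<delta>1 w) (\<delta>2 w)" for w
  have \<delta>C: "\<delta> \<in> Cplus" using \<delta>1(1) \<delta>2(1) unfolding Cplus_def \<delta>_def
    by (auto intro: continuous_intros)
  show "\<exists>\<delta>\<in>Cplus. \<forall>xs. pseudo_orbit f \<delta> xs \<longrightarrow> shadowed f \<epsilon> xs"
  proof (intro bexI[of _ \<delta>] allI impI)
    fix xs assume po: "pseudo_orbit f \<delta> xs"
    define w where "w i = f (xs i)" for i
    have st: "dist (w i) (xs (i+1)) < \<delta>1 (w i)" "dist (w i) (xs (i+1)) < \<delta>2 (w i)" for i
      using po unfolding pseudo_orbit_def w_def \<delta>_def by auto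
    have F1: "\<bar>V (xs (i+1)) - V (w i)\<bar> < \<beta> (w i)" for i
      using \<delta>1(2) st(1)[of i] by (auto simp: dist_real_def abs_minus_commute)
    have F2: "dist ((f^^k) (w i)) ((f^^k) (xs (i+1))) < \<eta> (w i)" for i k
      using \<delta>2(2) st(2)[of i] by auto
    have Vx: "V (xs i) = V (w i) + gp (w i)" for i unfolding gp_def w_def by simp
    have trap: "V (xs (i+1)) < r" if "V (xs i) < r" for i
    proof (cases "V (w i) < r/2")
      case True then show ?thesis using F1[of i] \<beta>1[of "w i"] r(1) by linarith
    next
      case False
      then show ?thesis using F1[of i] \<beta>2[of "w i"] Vx[of i] gp_nn[of "w i"] that by linarith
    qed
    have trapk: "V (xs (i + int k)) < r" if "V (xs i) < r" for i k
    proof (induction k)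
      case 0 then show ?case using that by simp
    next
      case (Suc k)
      have e: "i + int (Suc k) = i + int k + 1" by simp
      have "V (xs (i + int k + 1)) < r" using trap[of "i + int k"] Suc by simp
      then show ?case unfolding e .
    qed
    have etaV: "\<eta> (w i) \<le> \<Phi> (V (xs (i+1))) - \<Phi> (V (xs i))" if "V (xs i) \<ge> r" for i
    proof (cases "V (w i) < r/2")
      case True
      then have "V (xs (i+1)) \<le> 3*r/4" using F1[of i] \<beta>1[of "w i"] by linarith
      then have "\<Phi> (3*r/4) \<le> \<Phi> (V (xs (i+1)))" by (rule \<Phi>anti)
      moreover have "\<Phi> (V (xs i)) \<le> \<Phi> r" using that by (rule \<Phi>anti)
      moreover have "\<eta> (w i) \<le> c1" unfolding \<eta>_def by (simp add: min.coboundedI2)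
      ultimately show ?thesis unfolding c1_def by linarith
    next
      case False
      have "\<eta> (w i) \<le> A (w i)" unfolding \<eta>_def using False A_nn[of "w i"] by simp
      moreover have "V (xs (i+1)) \<le> V (w i) + gp (w i) / 2" using F1[of i] \<beta>2[of "w i"] False by linarith
      then have "\<Phi> (V (w i) + gp (w i) / 2) \<le> \<Phi> (V (xs (i+1)))" by (rule \<Phi>anti)
      ultimately show ?thesis unfolding A_def using Vx[of i] by simp
    qed
    have entry: "\<exists>k::nat. V (xs (N0 + int k)) < r" for N0
    proof (rule ccontr)
      assume ne: "\<not> (\<exists>k::nat. V (xs (N0 + int k)) < r)"
      define M where "M = V (xs N0)"
      define S where "S = {w. r/2 \<le> V w} \<inter> {w. V w \<le> M}"
      obtain \<gamma> where \<gamma>: "\<gamma> > 0" "\<forall>w\<in>S. \<gamma> \<le> gp w"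
      proof (cases "S = {}")
        case True then show ?thesis using that[of 1] by simp
      next
        case False
        have cl: "closed S" unfolding S_def
          by (intro closed_Int closed_Collect_le V_cont' continuous_on_const)
        have "S \<subseteq> cball p M"
        proof
          fix x assume "x \<in> S" then show "x \<in> cball p M"
            using V_dist[of x] unfolding S_def by (simp add: dist_commute)
        qed
        then have "bounded S" using bounded_cball bounded_subset by blast
        then have cp: "compact S" using cl by (simp add: compact_eq_bounded_closed)
        obtain x0 where x0: "x0 \<in> S" "\<forall>y\<in>S. gp x0 \<le> gp y"
          using continuous_attains_inf[OF cp False continuous_on_subset[OF gp_cont subset_UNIV]] by blast
        have "x0 \<noteq> p" using x0(1) r(1) unfolding S_def by auto
        then show ?thesis using that[of "gp x0"] gp_pos x0(2) by blast
      qed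
      have dec: "V (xs (N0 + int k)) \<le> M - real k * \<gamma> / 2" for k
      proof (induction k)
        case 0 then show ?case unfolding M_def by simp
      next
        case (Suc k)
        define i where "i = N0 + int k"
        have i1: "N0 + int (Suc k) = i + 1" unfolding i_def by simp
        have ge: "V (xs i) \<ge> r" using ne unfolding i_def by (meson not_less)
        have ge1: "V (xs (i+1)) \<ge> r" using ne i1 by (metis not_less)
        have le: "V (xs i) \<le> M - real k * \<gamma> / 2" using Suc unfolding i_def .
        show ?case
        proof (cases "V (w i) < r/2")
          case True
          then have "V (xs (i+1)) < r" using F1[of i] \<beta>1[of "w i"] r(1) by linarith
          then show ?thesis using ge1 by simp
        next
          case False
          have "real k * \<gamma> / 2 \<ge> 0" using \<gamma>(1) by simp
          then have "w i \<in> S" unfolding S_def using False Vx[of i] gp_nn[of "w i"] le by auto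
          then have "\<gamma> \<le> gp (w i)" using \<gamma>(2) by blast
          moreover have "V (xs (i+1)) < V (w i) + gp (w i) / 2" using F1[of i] \<beta>2[of "w i"] False by linarith
          moreover have "real (Suc k) * \<gamma> / 2 = real k * \<gamma> / 2 + \<gamma> / 2" by (simp add: algebra_simps)
          ultimately show ?thesis unfolding i1 using Vx[of i] le by linarith
        qed
      qed
      define k where "k = nat \<lceil>2 * M / \<gamma>\<rceil> + 1"
      have "real k > 2 * M / \<gamma>" unfolding k_def by linarith
      then have "real k * \<gamma> > 2 * M" using \<gamma>(1) by (simp add: divide_less_eq)
      then have "V (xs (N0 + int k)) < 0" using dec[of k] by simp
      then show False using V_nonneg by (metis not_less)
    qed
    show "shadowed f \<epsilon> xs"
    proof (cases "\<forall>N. \<exists>n\<le>N. V (xs n) < r")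
      case True
      have all: "V (xs n) < r" for n
      proof -
        obtain m where m: "m \<le> n" "V (xs m) < r" using True by blast
        have "V (xs (m + int (nat (n - m)))) < r" using trapk[OF m(2)] .
        then show ?thesis using m(1) by simp
      qed
      show ?thesis unfolding shadowed_def
      proof (intro exI[of _ p] allI)
        fix n
        have d: "dist (xs n) p < r" using V_dist[of "xs n"] all[of n] by linarith
        have "dist (iter_int f n p) (xs n) < r" using d by (simp add: iter_int_p dist_commute)
        also have "r < \<epsilon> (xs n)" using r(2)[OF d] r(1) by linarith
        finally show "dist (iter_int f n p) (xs n) < \<epsilon> (xs n)" .
      qed
    next
      case False
      then obtain N where N: "\<forall>n\<le>N. V (xs n) \<ge> r" by (metis not_less)
      define K where "K = (LEAST k::nat. V (xs (N + int k)) < r)"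
      define T where "T = N + int K"
      have VT: "V (xs T) < r" unfolding T_def K_def using entry[of N] by (rule LeastI_ex)
      have before: "V (xs i) \<ge> r" if "i < T" for i
      proof (cases "i \<le> N")
        case True then show ?thesis using N by blast
      next
        case False
        define k where "k = nat (i - N)"
        have ik: "i = N + int k" and kK: "k < K" using False that unfolding k_def T_def by auto
        have "\<not> V (xs (N + int k)) < r" using not_less_Least[OF kK[unfolded K_def]] .
        then show ?thesis using ik by simp
      qed
      have tele: "dist ((f^^k) (xs (T - int j - int k))) (xs (T - int j))
          \<le> \<Phi> (V (xs (T - int j))) - \<Phi> (V (xs (T - int j - int k)))" for j k
      proof (induction k)
        case 0 then show ?case by simp
      next
        case (Suc k)
        define i where "i = T - int j - int (Suc k)"
        have i1: "i + 1 = T - int j - int k" unfolding i_def by simp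
        have iT: "i < T" unfolding i_def by simp
        have e1: "(f^^Suc k) (xs i) = (f^^k) (w i)" unfolding w_def by (simp add: funpow_swap1)
        have "dist ((f^^k) (w i)) (xs (T - int j))
            \<le> dist ((f^^k) (w i)) ((f^^k) (xs (i+1))) + dist ((f^^k) (xs (i+1))) (xs (T - int j))"
          by (rule dist_triangle)
        also have "\<dots> \<le> \<eta> (w i) + (\<Phi> (V (xs (T - int j))) - \<Phi> (V (xs (i+1))))"
          using F2[of k i] Suc unfolding i1 by simp
        also have "\<dots> \<le> \<Phi> (V (xs (T - int j))) - \<Phi> (V (xs i))"
          using etaV[OF before[OF iT]] by simp
        finally show ?case using e1 unfolding i_def by simp
      qed
      define ys where "ys k = (f^^k) (xs (T - int k))" for k
      have ysb: "dist (ys k) (xs T) \<le> \<Phi> (V (xs T))" for k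
        using tele[of k 0] \<Phi>pos[of "V (xs (T - int k))"] unfolding ys_def by simp
      have "ys k \<in> cball (xs T) c0" for k using ysb[of k] \<Phi>c0[of "xs T"] by (simp add: dist_commute)
      then obtain l \<sigma> where l: "strict_mono (\<sigma> :: nat \<Rightarrow> nat)" "(ys \<circ> \<sigma>) \<longlonglongrightarrow> l"
        using seq_compactE[OF compact_imp_seq_compact[OF compact_cball]] by metis
      have bk: "dist ((g^^j) l) (xs (T - int j)) \<le> \<Phi> (V (xs (T - int j)))" for j
      proof -
        have lim: "(\<lambda>m. (g^^j) (ys (\<sigma> m))) \<longlonglongrightarrow> (g^^j) l"
          using continuous_on_tendsto_compose[OF cont_gn l(2)] by (simp add: o_def)
        have "(\<lambda>m. dist ((g^^j) (ys (\<sigma> m))) (xs (T - int j))) \<longlonglongrightarrow> dist ((g^^j) l) (xs (T - int j))"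
          by (intro tendsto_dist lim tendsto_const)
        moreover have "\<exists>N. \<forall>m\<ge>N. dist ((g^^j) (ys (\<sigma> m))) (xs (T - int j)) \<le> \<Phi> (V (xs (T - int j)))"
        proof (intro exI[of _ j] allI impI)
          fix m assume "m \<ge> j"
          then have sj: "\<sigma> m \<ge> j" using seq_suble[OF l(1), of m] by linarith
          define k where "k = \<sigma> m - j"
          have "ys (\<sigma> m) = (f^^j) ((f^^k) (xs (T - int j - int k)))"
            unfolding ys_def k_def using sj
            by (metis (no_types, lifting) diff_diff_eq funpow_add le_add_diff_inverse o_apply of_nat_add)
          then have "(g^^j) (ys (\<sigma> m)) = (f^^k) (xs (T - int j - int k))" by (simp add: gn_fn)
          then show "dist ((g^^j) (ys (\<sigma> m))) (xs (T - int j)) \<le> \<Phi> (V (xs (T - int j)))"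
            using tele[of k j] \<Phi>pos[of "V (xs (T - int j - int k))"] by simp
        qed
        ultimately show ?thesis by (rule LIMSEQ_le_const2)
      qed
      have Vl: "V l < 2*r"
      proof -
        have "dist l (xs T) \<le> \<Phi> (V (xs T))" using bk[of 0] by simp
        then have d1: "dist (xs T) l < \<rho>V" using \<Phi>c0[of "xs T"] c0 by (simp add: dist_commute)
        have d2: "dist p (xs T) \<le> r" using V_dist[of "xs T"] VT by (simp add: dist_commute)
        have "dist (V (xs T)) (V l) < r" using \<rho>V(2) d1 d2 by blast
        then show ?thesis using VT unfolding dist_real_def by linarith
      qed
      have after: "V (xs n) < r" if "n \<ge> T" for n
      proof -
        have "V (xs (T + int (nat (n - T)))) < r" using trapk[OF VT] .
        then show ?thesis using that by simp
      qed
      define y where "y = iter_int f (-T) l"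
      have yit: "iter_int f n y = iter_int f (n - T) l" for n
        unfolding y_def iter_int_add by simp
      show ?thesis unfolding shadowed_def
      proof (intro exI[of _ y] allI)
        fix n
        show "dist (iter_int f n y) (xs n) < \<epsilon> (xs n)"
        proof (cases "n \<le> T")
          case True
          have "iter_int f n y = iter_int f (n - T) l" by (rule yit)
          also have "\<dots> = (g^^nat (T - n)) l"
            using True by (cases "n = T") (auto simp: iter_int_eq)
          finally have "iter_int f n y = (g^^nat (T - n)) l" .
          moreover have "T - int (nat (T - n)) = n" using True by simp
          ultimately have "dist (iter_int f n y) (xs n) \<le> \<Phi> (V (xs n))"
            using bk[of "nat (T - n)"] by simp
          also have "\<dots> < \<epsilon> (xs n)" using \<Phi>eps[of "xs n"] ep[of "xs n"] by linarith
          finally show ?thesis .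
        next
          case False
          have "iter_int f n y = iter_int f (n - T) l" by (rule yit)
          also have "\<dots> = (f^^nat (n - T)) l" using False by (simp add: iter_int_eq)
          finally have it: "iter_int f n y = (f^^nat (n - T)) l" .
          have "V ((f^^nat (n - T)) l) < 2*r" using V_fn Vl by (meson le_less_trans)
          then have d1: "dist ((f^^nat (n - T)) l) p < 2*r" using V_dist by (meson le_less_trans)
          have d2: "dist (xs n) p < r" using V_dist[of "xs n"] after[of n] False by linarith
          have "dist (iter_int f n y) (xs n) < 3*r"
            using dist_triangle[of "(f^^nat (n - T)) l" "xs n" p] d1 d2 unfolding it by (simp add: dist_commute)
          also have "\<dots> < \<epsilon> (xs n)" using r(2)[OF d2] .
          finally show ?thesis .
        qed
      qed
    qed
  qed (rule \<delta>C)
qed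

end

theorem mainTheorem9:
  fixes f :: "R2 \<Rightarrow> R2" and p :: R2
  assumes "is_homeo f"
    and "asymptotically_stable f p"
    and "basin f p = UNIV"
  shows "topological_shadowing f"
proof -
  obtain g where h: "homeomorphism UNIV UNIV f g" using assms(1) unfolding is_homeo_def by blast
  have fp: "f p = p" and ly: "lyapunov_stable f p"
    using assms(2) unfolding asymptotically_stable_def by auto
  have bs: "\<And>x. (\<lambda>n. (f ^^ n) x) \<longlonglongrightarrow> p"
  proof -
    fix x
    have "x \<in> basin f p" using assms(3) by simp
    then show "(\<lambda>n. (f ^^ n) x) \<longlonglongrightarrow> p" unfolding basin_def by simp
  qed
  interpret sys f g p using h fp ly bs by unfold_locales
  show ?thesis by (rule shadow)
qed

end
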